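(* Let $F,G,H$ be graphs. (a) If $F\to G$ and $c=\mathsf{HDE}(F,G)$, then $\hom(F,T)\ge \hom(G,T)^c$ for all graphs $T$. (b) The relation $\succcurlyeq$ (where $F\succcurlyeq G$ means $F\to G$ and $\mathsf{HDE}(F,G)\ge1$) is a partial order on graphs. (c) If $F\to G$ and $G\to H$, then $\mathsf{HDE}(F,H)\ge \mathsf{HDE}(F,G)\cdot\mathsf{HDE}(G,H)$. (d) If $F\to G$, then $\mathsf{HDE}(m\cdot F,n\cdot G)=\frac mn\,\mathsf{HDE}(F,G)$ for all positive integers $m,n$. (e) If there is a homomorphism from $F$ onto $G$ that is surjective on vertices, then $F\succcurlyeq G$. (f) If $F\to G$, then $\mathsf{HDE}(F,G)>0$ if and only if $\bigcup_{\varphi\in\mathsf{Hom}(F,G)}\varphi(V_F)=V_G$.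
   Context: Graphs are finite directed graphs $G=(V_G,E_G)$ with $V_G$ nonempty finite and $E_G\subseteq V_G\times V_G$ (loops allowed). A homomorphism $\varphi:F\to G$ is a map $V_F\to V_G$ with $(\varphi(a),\varphi(b))\in E_G$ for all $(a,b)\in E_F$; $\mathsf{Hom}(F,G)$ is their set, $\hom(F,G)$ its size, and $F\to G$ means $\hom(F,G)\ge1$. For $F\to G$, $\mathsf{HDE}(F,G)=\sup\{c\in\mathbb R:\hom(F,T)\ge\hom(G,T)^c\text{ for all graphs }T\}$. $k\cdot G$ denotes the disjoint union of $k$ copies of $G$. *)

theory Defs
  imports Complex_Main "HOL-Library.FuncSet" "HOL-Library.Nat_Bijection"
begin

text \<open>Vertices are natural numbers;
  every finite graph is isomorphic to one of these, and all notions below are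
  invariant under isomorphism, so quantifying over test graphs T of this
  form is quantifying over all graphs up to isomorphism.\<close>

type_synonym graph = "nat set \<times> (nat \<times> nat) set"

definition verts :: "graph \<Rightarrow> nat set" where "verts G = fst G"
definition arcs :: "graph \<Rightarrow> (nat \<times> nat) set" where "arcs G = snd G"

definition wf_graph :: "graph \<Rightarrow> bool" where
  "wf_graph G \<longleftrightarrow> finite (verts G) \<and> verts G \<noteq> {} \<and> arcs G \<subseteq> verts G \<times> verts G"

definition Hom :: "graph \<Rightarrow> graph \<Rightarrow> (nat \<Rightarrow> nat) set" where
  "Hom F G = {f. f \<in> verts F \<rightarrow>\<^sub>E verts G \<and> (\<forall>(a,b)\<in>arcs F. (f a, f b) \<in> arcs G)}"

definition hom :: "graph \<Rightarrow> graph \<Rightarrow> nat" where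
  "hom F G = card (Hom F G)"

definition homto :: "graph \<Rightarrow> graph \<Rightarrow> bool" where
  "homto F G \<longleftrightarrow> hom F G \<ge> 1"

text \<open>Homomorphism domination exponent. Convention: 0 powr c = 0 (Isabelle's powr).\<close>
definition HDE :: "graph \<Rightarrow> graph \<Rightarrow> real" where
  "HDE F G = Sup {c::real. \<forall>T. wf_graph T \<longrightarrow> real (hom G T) powr c \<le> real (hom F T)}"

definition succeq :: "graph \<Rightarrow> graph \<Rightarrow> bool" where
  "succeq F G \<longleftrightarrow> homto F G \<and> HDE F G \<ge> 1"

definition graph_iso :: "graph \<Rightarrow> graph \<Rightarrow> bool" where
  "graph_iso F G \<longleftrightarrow> (\<exists>f. bij_betw f (verts F) (verts G) \<and>
      (\<forall>a\<in>verts F. \<forall>b\<in>verts F. (a,b) \<in> arcs F \<longleftrightarrow> (f a, f b) \<in> arcs G))"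

definition copies :: "nat \<Rightarrow> graph \<Rightarrow> graph" where
  "copies k G = ({prod_encode (i, v) | i v. i < k \<and> v \<in> verts G},
                 {(prod_encode (i, a), prod_encode (i, b)) | i a b. i < k \<and> (a, b) \<in> arcs G})"

end

theory Submission imports Defs begin

definition HS :: "graph \<Rightarrow> graph \<Rightarrow> real set" where
  "HS F G = {c::real. \<forall>T. wf_graph T \<longrightarrow> real (hom G T) powr c \<le> real (hom F T)}"

lemma HDE_HS: "HDE F G = Sup (HS F G)" unfolding HDE_def HS_def by simp

lemma Hom_sub: "Hom F T \<subseteq> (verts F \<rightarrow>\<^sub>E verts T)" unfolding Hom_def by auto

lemma finite_Hom: "finite (verts F) \<Longrightarrow> finite (verts T) \<Longrightarrow> finite (Hom F T)"
  by (rule finite_subset[OF Hom_sub]) (simp add: finite_PiE)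

lemma homto_iff: "finite (verts F) \<Longrightarrow> finite (verts T) \<Longrightarrow> homto F T \<longleftrightarrow> Hom F T \<noteq> {}"
  unfolding homto_def hom_def using finite_Hom[of F T]
  by (simp add: Suc_le_eq card_gt_0_iff)

lemma Hom_comp: "arcs F \<subseteq> verts F \<times> verts F \<Longrightarrow> f \<in> Hom F G \<Longrightarrow> g \<in> Hom G H \<Longrightarrow> restrict (g \<circ> f) (verts F) \<in> Hom F H"
proof -
  assume A: "arcs F \<subseteq> verts F \<times> verts F" and f: "f \<in> Hom F G" and g: "g \<in> Hom G H"
  have f1: "f \<in> verts F \<rightarrow>\<^sub>E verts G" and f2: "\<forall>(a,b)\<in>arcs F. (f a, f b) \<in> arcs G"
    using f unfolding Hom_def by auto
  have g1: "g \<in> verts G \<rightarrow>\<^sub>E verts H" and g2: "\<forall>(a,b)\<in>arcs G. (g a, g b) \<in> arcs H"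
    using g unfolding Hom_def by auto
  have "restrict (g \<circ> f) (verts F) \<in> verts F \<rightarrow>\<^sub>E verts H"
    using f1 g1 by (auto simp: PiE_def Pi_def)
  moreover have "(restrict (g \<circ> f) (verts F) a, restrict (g \<circ> f) (verts F) b) \<in> arcs H"
    if ab: "(a, b) \<in> arcs F" for a b
  proof -
    have "a \<in> verts F" "b \<in> verts F" using A ab by auto
    moreover have "(f a, f b) \<in> arcs G" using f2 ab by auto
    ultimately show ?thesis using g2 by auto
  qed
  ultimately show ?thesis unfolding Hom_def by blast
qed

lemma homto_trans: "wf_graph F \<Longrightarrow> wf_graph G \<Longrightarrow> finite (verts H) \<Longrightarrow> homto F G \<Longrightarrow> homto G H \<Longrightarrow> homto F H"
proof -
  assume a: "wf_graph F" "wf_graph G" "finite (verts H)" "homto F G" "homto G H"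
  have fF: "finite (verts F)" and fG: "finite (verts G)" and AF: "arcs F \<subseteq> verts F \<times> verts F"
    using a(1,2) unfolding wf_graph_def by auto
  obtain f where f: "f \<in> Hom F G" using homto_iff[OF fF fG] a(4) by auto
  obtain g where g: "g \<in> Hom G H" using homto_iff[OF fG a(3)] a(5) by auto
  have "restrict (g \<circ> f) (verts F) \<in> Hom F H" by (rule Hom_comp[OF AF f g])
  then show ?thesis using homto_iff[OF fF a(3)] by auto
qed

lemma hom_pos_real: "wf_graph F \<Longrightarrow> wf_graph G \<Longrightarrow> wf_graph T \<Longrightarrow> homto F G \<Longrightarrow> hom G T \<noteq> 0 \<Longrightarrow> real (hom F T) \<ge> 1"
proof -
  assume a: "wf_graph F" "wf_graph G" "wf_graph T" "homto F G" "hom G T \<noteq> 0"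
  have "homto G T" using a(5) unfolding homto_def by simp
  then have "homto F T" using homto_trans[OF a(1,2) _ a(4)] a(3) unfolding wf_graph_def by blast
  then show ?thesis unfolding homto_def by simp
qed

lemma HS_zero: "wf_graph F \<Longrightarrow> wf_graph G \<Longrightarrow> homto F G \<Longrightarrow> 0 \<in> HS F G"
  unfolding HS_def using hom_pos_real by fastforce

lemma HS_down: "c \<in> HS F G \<Longrightarrow> d \<le> c \<Longrightarrow> d \<in> HS F G"
  unfolding HS_def mem_Collect_eq
proof (intro allI impI)
  fix T assume "\<forall>T. wf_graph T \<longrightarrow> real (hom G T) powr c \<le> real (hom F T)" "d \<le> c" "wf_graph T"
  then have h: "real (hom G T) powr c \<le> real (hom F T)" by blast
  show "real (hom G T) powr d \<le> real (hom F T)"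
  proof (cases "hom G T = 0")
    case True then show ?thesis by simp
  next
    case False
    then have "real (hom G T) powr d \<le> real (hom G T) powr c"
      using \<open>d \<le> c\<close> by (intro powr_mono) auto
    then show ?thesis using h by linarith
  qed
qed

lemma lim_aux: fixes c L M :: real
  assumes "\<forall>d<c. d * L \<le> M" "0 \<le> L" shows "c * L \<le> M"
proof (rule ccontr)
  assume "\<not> c * L \<le> M"
  then have L: "L > 0" using assms by (cases "L = 0") (auto simp: not_le, metis mult_zero_right not_less assms(1) lt_ex)
  define d where "d = (c + M / L) / 2"
  have "M / L < c" using \<open>\<not> c * L \<le> M\<close> L by (simp add: pos_divide_less_eq)
  then have "d < c" unfolding d_def by simp
  moreover have "d * L > M" unfolding d_def using \<open>\<not> c * L \<le> M\<close> L
    by (simp add: field_simps)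
  ultimately show False using assms(1) by force
qed

lemma HS_closed: assumes "\<forall>d<c. d \<in> HS F G" shows "c \<in> HS F G"
  unfolding HS_def mem_Collect_eq
proof (intro allI impI)
  fix T assume T: "wf_graph T"
  have h: "\<forall>d<c. real (hom G T) powr d \<le> real (hom F T)" using assms T unfolding HS_def by blast
  show "real (hom G T) powr c \<le> real (hom F T)"
  proof (cases "hom G T = 0")
    case True then show ?thesis by simp
  next
    case False
    define x where "x = real (hom G T)"
    have x1: "x \<ge> 1" using False x_def by simp
    have p1: "x powr (c - 1) \<le> real (hom F T)" using h x_def by simp
    have p2: "x powr (c - 1) > 0" using x1 by simp
    have ypos: "real (hom F T) > 0" using p1 p2 by linarith
    have "\<forall>d<c. d * ln x \<le> ln (real (hom F T))"
    proof (intro allI impI)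
      fix d assume "d < c"
      then have "x powr d \<le> real (hom F T)" using h x_def by auto
      then have "ln (x powr d) \<le> ln (real (hom F T))" using x1 ypos by (subst ln_le_cancel_iff) auto
      then show "d * ln x \<le> ln (real (hom F T))" using x1 by simp
    qed
    then have "c * ln x \<le> ln (real (hom F T))" using lim_aux x1 by simp
    then have "ln (x powr c) \<le> ln (real (hom F T))" using x1 by simp
    then show ?thesis using x1 ypos x_def by (subst (asm) ln_le_cancel_iff) auto
  qed
qed


definition K2 :: graph where "K2 = ({0,1}, {0,1} \<times> {0,1})"

lemma K2_wf: "wf_graph K2" unfolding K2_def wf_graph_def verts_def arcs_def by auto

lemma Hom_K2: "wf_graph F \<Longrightarrow> Hom F K2 = (verts F \<rightarrow>\<^sub>E {0,1})"
  unfolding Hom_def K2_def wf_graph_def verts_def arcs_def by (fastforce simp: PiE_def Pi_def)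

lemma hom_K2: "wf_graph F \<Longrightarrow> hom F K2 = 2 ^ card (verts F)"
  unfolding hom_def by (simp add: Hom_K2 card_PiE wf_graph_def numeral_2_eq_2)

lemma HS_bound: assumes "wf_graph F" "wf_graph G" "c \<in> HS F G" shows "c \<le> real (card (verts F))"
proof (rule ccontr)
  assume "\<not> ?thesis"
  then have c: "c > real (card (verts F))" by simp
  have nG: "card (verts G) \<ge> 1" using assms(2) unfolding wf_graph_def
    by (simp add: Suc_leI card_gt_0_iff)
  have "real (hom G K2) powr c \<le> real (hom F K2)" using assms(3) K2_wf unfolding HS_def by blast
  then have h: "(2 ^ card (verts G)) powr c \<le> 2 ^ card (verts F)"
    using hom_K2 assms(1,2) unfolding wf_graph_def by simp
  have "(2::real) \<le> 2 ^ card (verts G)" using nG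
    by (metis power_one_right power_increasing one_le_numeral)
  then have "(2::real) powr c \<le> (2 ^ card (verts G)) powr c" using c
    by (intro powr_mono2) auto
  moreover have "(2::real) powr (real (card (verts F))) < 2 powr c" using c by (intro powr_less_mono) auto
  ultimately show False using h by (simp add: powr_realpow)
qed

lemma HS_bdd: "wf_graph F \<Longrightarrow> wf_graph G \<Longrightarrow> bdd_above (HS F G)"
  by (rule bdd_aboveI[where M="real (card (verts F))"]) (rule HS_bound)

lemma HS_char: assumes "wf_graph F" "wf_graph G" "homto F G"
  shows "HS F G = {c. c \<le> HDE F G}"
proof
  show "HS F G \<subseteq> {c. c \<le> HDE F G}" unfolding HDE_HS using cSup_upper[OF _ HS_bdd[OF assms(1,2)]] by auto
next
  show "{c. c \<le> HDE F G} \<subseteq> HS F G"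
  proof
    fix c assume "c \<in> {c. c \<le> HDE F G}"
    then have c: "c \<le> Sup (HS F G)" unfolding HDE_HS by simp
    have ne: "HS F G \<noteq> {}" using HS_zero assms by blast
    have "\<forall>d<c. d \<in> HS F G"
    proof (intro allI impI)
      fix d assume "d < c"
      then have "d < Sup (HS F G)" using c by simp
      then obtain s where "s \<in> HS F G" "d < s" using less_cSup_iff[OF ne HS_bdd[OF assms(1,2)]] by auto
      then show "d \<in> HS F G" using HS_down[of s F G d] by simp
    qed
    then show "c \<in> HS F G" by (rule HS_closed)
  qed
qed

lemma HDE_in: "wf_graph F \<Longrightarrow> wf_graph G \<Longrightarrow> homto F G \<Longrightarrow> HDE F G \<in> HS F G"
  using HS_char[of F G] by simp

lemma HDE_nonneg: "wf_graph F \<Longrightarrow> wf_graph G \<Longrightarrow> homto F G \<Longrightarrow> HDE F G \<ge> 0"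
  using HS_char[of F G] HS_zero[of F G] by simp

lemma HDE_ge: "wf_graph F \<Longrightarrow> wf_graph G \<Longrightarrow> homto F G \<Longrightarrow> c \<in> HS F G \<Longrightarrow> c \<le> HDE F G"
  using HS_char[of F G] by simp

lemma partA: "wf_graph F \<Longrightarrow> wf_graph G \<Longrightarrow> homto F G \<Longrightarrow> wf_graph T \<Longrightarrow> real (hom G T) powr HDE F G \<le> real (hom F T)"
proof -
  assume a: "wf_graph F" "wf_graph G" "homto F G" "wf_graph T"
  have "HDE F G \<in> HS F G" using HDE_in a(1-3) by blast
  then show ?thesis unfolding HS_def mem_Collect_eq using a(4) by blast
qed


lemma partC: assumes "wf_graph F" "wf_graph G" "wf_graph H" "homto F G" "homto G H"
  shows "HDE F G * HDE G H \<le> HDE F H"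
proof -
  have FH: "homto F H" using homto_trans assms unfolding wf_graph_def by blast
  have a0: "HDE F G \<ge> 0" using HDE_nonneg assms by blast
  have "HDE F G * HDE G H \<in> HS F H" unfolding HS_def mem_Collect_eq
  proof (intro allI impI)
    fix T assume T: "wf_graph T"
    have h1: "real (hom H T) powr HDE G H \<le> real (hom G T)" using partA assms T by blast
    have h2: "real (hom G T) powr HDE F G \<le> real (hom F T)" using partA assms T by blast
    have "real (hom H T) powr (HDE F G * HDE G H) = (real (hom H T) powr HDE G H) powr HDE F G"
      by (simp add: powr_powr mult.commute)
    also have "\<dots> \<le> real (hom G T) powr HDE F G" using h1 a0 by (intro powr_mono2) auto
    finally show "real (hom H T) powr (HDE F G * HDE G H) \<le> real (hom F T)" using h2 by linarith
  qed
  then show ?thesis using HDE_ge assms(1,3) FH by blast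
qed

lemma partE: assumes "wf_graph F" "wf_graph G" "f \<in> Hom F G" "f ` verts F = verts G"
  shows "succeq F G"
proof -
  have FG: "homto F G" using homto_iff assms unfolding wf_graph_def by blast
  have "1 \<in> HS F G" unfolding HS_def mem_Collect_eq
  proof (intro allI impI)
    fix T assume T: "wf_graph T"
    have "inj_on (\<lambda>g. restrict (g \<circ> f) (verts F)) (Hom G T)"
    proof (rule inj_onI)
      fix g g' assume g: "g \<in> Hom G T" "g' \<in> Hom G T"
        and eq: "restrict (g \<circ> f) (verts F) = restrict (g' \<circ> f) (verts F)"
      show "g = g'"
      proof
        fix v show "g v = g' v"
        proof (cases "v \<in> verts G")
          case True
          then obtain u where "u \<in> verts F" "v = f u" using assms(4) by blast
          then show ?thesis using fun_cong[OF eq, of u] by simp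
        next
          case False then show ?thesis using g unfolding Hom_def by (auto simp: PiE_def extensional_def)
        qed
      qed
    qed
    moreover have "(\<lambda>g. restrict (g \<circ> f) (verts F)) ` Hom G T \<subseteq> Hom F T"
      using Hom_comp assms(1,3) unfolding wf_graph_def by blast
    moreover have "finite (Hom F T)" using finite_Hom assms T unfolding wf_graph_def by blast
    ultimately have "hom G T \<le> hom F T" unfolding hom_def by (rule card_inj_on_le)
    then show "real (hom G T) powr 1 \<le> real (hom F T)" by simp
  qed
  then have "1 \<le> HDE F G" using HDE_ge assms FG by blast
  then show ?thesis using FG unfolding succeq_def by simp
qed

lemma verts_copies: "verts (copies k F) = {prod_encode (i, v) | i v. i < k \<and> v \<in> verts F}"
  unfolding copies_def verts_def by simp

lemma arcs_copies: "arcs (copies k F) = {(prod_encode (i, a), prod_encode (i, b)) | i a b. i < k \<and> (a, b) \<in> arcs F}"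
  unfolding copies_def arcs_def by simp

lemma hom_copies: assumes "wf_graph F" shows "hom (copies k F) T = hom F T ^ k"
proof -
  let ?V = "verts (copies k F)"
  define Phi where "Phi h = (\<lambda>i\<in>{..<k}. \<lambda>v\<in>verts F. h (prod_encode (i, v)))" for h :: "nat \<Rightarrow> nat"
  define Psi where "Psi H = (\<lambda>x\<in>?V. H (fst (prod_decode x)) (snd (prod_decode x)))" for H :: "nat \<Rightarrow> nat \<Rightarrow> nat"
  have AF: "arcs F \<subseteq> verts F \<times> verts F" using assms unfolding wf_graph_def by auto
  have "bij_betw Phi (Hom (copies k F) T) ({..<k} \<rightarrow>\<^sub>E Hom F T)"
  proof (rule bij_betw_byWitness[where f'=Psi])
    show "\<forall>h\<in>Hom (copies k F) T. Psi (Phi h) = h"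
    proof
      fix h assume h: "h \<in> Hom (copies k F) T"
      show "Psi (Phi h) = h"
      proof
        fix x show "Psi (Phi h) x = h x"
        proof (cases "x \<in> ?V")
          case True
          then obtain i v where "x = prod_encode (i, v)" "i < k" "v \<in> verts F" unfolding verts_copies by blast
          then show ?thesis unfolding Psi_def Phi_def using True by simp
        next
          case False then show ?thesis using h unfolding Psi_def Hom_def by (auto simp: PiE_def extensional_def)
        qed
      qed
    qed
    show "\<forall>H\<in>{..<k} \<rightarrow>\<^sub>E Hom F T. Phi (Psi H) = H"
    proof
      fix H assume H: "H \<in> {..<k} \<rightarrow>\<^sub>E Hom F T"
      show "Phi (Psi H) = H"
      proof
        fix i show "Phi (Psi H) i = H i"
        proof (cases "i < k")
          case True
          then have Hi: "H i \<in> Hom F T" using H by auto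
          show ?thesis
          proof
            fix v show "Phi (Psi H) i v = H i v"
            proof (cases "v \<in> verts F")
              case True
              then have "prod_encode (i, v) \<in> ?V" using \<open>i < k\<close> unfolding verts_copies by blast
              then show ?thesis unfolding Phi_def Psi_def using True \<open>i < k\<close> by simp
            next
              case False then show ?thesis using Hi \<open>i < k\<close> unfolding Phi_def Hom_def by (auto simp: PiE_def extensional_def)
            qed
          qed
        next
          case False then show ?thesis using H unfolding Phi_def by (auto simp: PiE_def extensional_def)
        qed
      qed
    qed
    show "Phi ` Hom (copies k F) T \<subseteq> {..<k} \<rightarrow>\<^sub>E Hom F T"
    proof
      fix H assume "H \<in> Phi ` Hom (copies k F) T"
      then obtain h where h: "h \<in> Hom (copies k F) T" and HH: "H = Phi h" by blast
      have "Phi h i \<in> Hom F T" if "i < k" for i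
      proof -
        have mem: "prod_encode (i, v) \<in> ?V" if "v \<in> verts F" for v using \<open>i < k\<close> that unfolding verts_copies by blast
        have arc: "(prod_encode (i, a), prod_encode (i, b)) \<in> arcs (copies k F)" if "(a,b) \<in> arcs F" for a b
          using \<open>i < k\<close> that unfolding arcs_copies by blast
        show ?thesis unfolding Phi_def Hom_def using that h mem arc AF unfolding Hom_def
          by (fastforce simp: PiE_def Pi_def)
      qed
      then show "H \<in> {..<k} \<rightarrow>\<^sub>E Hom F T" unfolding HH by (auto simp: Phi_def PiE_def)
    qed
    show "Psi ` ({..<k} \<rightarrow>\<^sub>E Hom F T) \<subseteq> Hom (copies k F) T"
    proof
      fix h assume "h \<in> Psi ` ({..<k} \<rightarrow>\<^sub>E Hom F T)"
      then obtain H where H: "H \<in> {..<k} \<rightarrow>\<^sub>E Hom F T" and hh: "h = Psi H" by blast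
      have Hi: "H i \<in> Hom F T" if "i < k" for i using H that by auto
      have 1: "h \<in> ?V \<rightarrow>\<^sub>E verts T"
      proof
        fix x assume "x \<in> ?V"
        then obtain i v where "x = prod_encode (i, v)" "i < k" "v \<in> verts F" unfolding verts_copies by blast
        then show "h x \<in> verts T" using Hi[of i] \<open>x \<in> ?V\<close> unfolding hh Psi_def Hom_def by auto
      next
        fix x assume "x \<notin> ?V" then show "h x = undefined" unfolding hh Psi_def by simp
      qed
      have 2: "(h a, h b) \<in> arcs T" if ab: "(a, b) \<in> arcs (copies k F)" for a b
      proof -
        obtain i u w where e: "a = prod_encode (i, u)" "b = prod_encode (i, w)" "i < k" "(u, w) \<in> arcs F"
          using ab unfolding arcs_copies by blast
        then have "u \<in> verts F" "w \<in> verts F" using AF by auto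
        then have "a \<in> ?V" "b \<in> ?V" using e unfolding verts_copies by blast+
        then show ?thesis using Hi[of i] e unfolding hh Psi_def Hom_def by auto
      qed
      show "h \<in> Hom (copies k F) T" unfolding Hom_def using 1 2 by blast
    qed
  qed
  then have "hom (copies k F) T = card ({..<k} \<rightarrow>\<^sub>E Hom F T)" unfolding hom_def by (rule bij_betw_same_card)
  then show ?thesis by (simp add: card_PiE hom_def)
qed

lemma powr_aux: fixes x y m n :: nat
  assumes "m > 0" "n > 0" "x > 0 \<longrightarrow> y > 0"
  shows "(real (x ^ n) powr c \<le> real (y ^ m)) \<longleftrightarrow> (real x powr (real n * c / real m) \<le> real y)"
proof (cases "x = 0")
  case True then show ?thesis using assms by (simp add: zero_power)
next
  case False
  then have x: "real x > 0" and y: "real y > 0" using assms by auto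
  have "(real (x ^ n) powr c \<le> real (y ^ m)) \<longleftrightarrow> ln (real (x ^ n) powr c) \<le> ln (real (y ^ m))"
    using x y by (subst ln_le_cancel_iff) auto
  also have "\<dots> \<longleftrightarrow> c * (real n * ln (real x)) \<le> real m * ln (real y)"
    using x y by (simp add: ln_realpow)
  also have "\<dots> \<longleftrightarrow> (real n * c / real m) * ln (real x) \<le> ln (real y)"
    using assms(1) by (simp add: field_simps)
  also have "\<dots> \<longleftrightarrow> ln (real x powr (real n * c / real m)) \<le> ln (real y)"
    using x by simp
  also have "\<dots> \<longleftrightarrow> real x powr (real n * c / real m) \<le> real y"
    using x y by (subst ln_le_cancel_iff) auto
  finally show ?thesis .
qed

lemma partD: assumes "wf_graph F" "wf_graph G" "homto F G" "m > 0" "n > 0"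
  shows "HDE (copies m F) (copies n G) = real m / real n * HDE F G"
proof -
  have "HS (copies m F) (copies n G) = {c. c \<le> real m / real n * HDE F G}"
  proof (intro set_eqI)
    fix c
    have pos: "hom G T > 0 \<longrightarrow> hom F T > 0" if "wf_graph T" for T
      using hom_pos_real[OF assms(1,2) that assms(3)] by auto
    have "c \<in> HS (copies m F) (copies n G) \<longleftrightarrow>
       (\<forall>T. wf_graph T \<longrightarrow> real (hom G T ^ n) powr c \<le> real (hom F T ^ m))"
      unfolding HS_def using hom_copies assms(1,2) by simp
    also have "\<dots> \<longleftrightarrow> (\<forall>T. wf_graph T \<longrightarrow> real (hom G T) powr (real n * c / real m) \<le> real (hom F T))"
      using powr_aux[OF assms(4,5)] pos by blast
    also have "\<dots> \<longleftrightarrow> real n * c / real m \<in> HS F G" unfolding HS_def by simp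
    also have "\<dots> \<longleftrightarrow> real n * c / real m \<le> HDE F G" using HS_char assms by blast
    also have "\<dots> \<longleftrightarrow> c \<le> real m / real n * HDE F G" using assms(4,5)
      by (simp add: field_simps)
    finally show "c \<in> HS (copies m F) (copies n G) \<longleftrightarrow> c \<in> {c. c \<le> real m / real n * HDE F G}" by simp
  qed
  then show ?thesis unfolding HDE_HS by (simp add: atMost_def[symmetric])
qed

lemma blowup: assumes F: "wf_graph F" and G: "wf_graph G" and v: "v \<in> verts G"
  and unc: "\<forall>\<phi>\<in>Hom F G. v \<notin> \<phi> ` verts F"
  shows "\<exists>T. wf_graph T \<and> N \<le> hom G T \<and> hom F T \<le> hom F G"
proof -
  define M where "M = Suc (Max (verts G))"
  define D where "D = {M..<M+N}"
  define p where "p x = (if x \<in> verts G then x else v)" for x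
  define VT where "VT = verts G \<union> D"
  define T where "T = (VT, {(a,b) \<in> VT \<times> VT. (p a, p b) \<in> arcs G})"
  have fG: "finite (verts G)" and AG: "arcs G \<subseteq> verts G \<times> verts G" and AF: "arcs F \<subseteq> verts F \<times> verts F"
    and fF: "finite (verts F)"
    using F G unfolding wf_graph_def by auto
  have Dn: "d \<notin> verts G" if "d \<in> D" for d
  proof
    assume "d \<in> verts G"
    then have "d \<le> Max (verts G)" using fG by simp
    then show False using that unfolding D_def M_def by simp
  qed
  have vT: "verts T = VT" and aT: "arcs T = {(a,b) \<in> VT \<times> VT. (p a, p b) \<in> arcs G}"
    unfolding T_def verts_def arcs_def by simp_all
  have wfT: "wf_graph T" unfolding wf_graph_def vT aT VT_def D_def using fG v by auto
  have fT: "finite (verts T)" using wfT unfolding wf_graph_def by simp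
  define psi where "psi d = restrict (\<lambda>u. if u = v then d else u) (verts G)" for d
  have psiH: "psi d \<in> Hom G T" if "d \<in> D" for d
  proof -
    have pp: "p (psi d u) = u" if "u \<in> verts G" for u
      using that Dn[OF \<open>d \<in> D\<close>] unfolding psi_def p_def by (auto simp: v)
    have "psi d \<in> verts G \<rightarrow>\<^sub>E verts T" unfolding psi_def vT VT_def using that by auto
    moreover have "(psi d a, psi d b) \<in> arcs T" if "(a, b) \<in> arcs G" for a b
    proof -
      have "a \<in> verts G" "b \<in> verts G" using that AG by auto
      then show ?thesis unfolding aT using pp that \<open>d \<in> D\<close> unfolding psi_def VT_def by auto
    qed
    ultimately show ?thesis unfolding Hom_def by blast
  qed
  have "inj_on psi D"
  proof (rule inj_onI)
    fix d d' assume "psi d = psi d'" then have "psi d v = psi d' v" by simp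
    then show "d = d'" unfolding psi_def using v by simp
  qed
  then have "card (psi ` D) = N" unfolding D_def by (simp add: card_image)
  moreover have "card (psi ` D) \<le> hom G T" unfolding hom_def
    using psiH finite_Hom[OF fG fT] by (intro card_mono) auto
  ultimately have N: "N \<le> hom G T" by simp
  define chi where "chi h = restrict (p \<circ> h) (verts F)" for h :: "nat \<Rightarrow> nat"
  have chiH: "chi h \<in> Hom F G" if h: "h \<in> Hom F T" for h
  proof -
    have pin: "p x \<in> verts G" for x unfolding p_def using v by auto
    have "chi h \<in> verts F \<rightarrow>\<^sub>E verts G" unfolding chi_def using pin by auto
    moreover have "(chi h a, chi h b) \<in> arcs G" if "(a, b) \<in> arcs F" for a b
    proof -
      have "a \<in> verts F" "b \<in> verts F" using that AF by auto
      moreover have "(h a, h b) \<in> arcs T" using h that unfolding Hom_def by auto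
      ultimately show ?thesis unfolding chi_def aT by auto
    qed
    ultimately show ?thesis unfolding Hom_def by blast
  qed
  have "inj_on chi (Hom F T)"
  proof (rule inj_onI)
    fix h h' assume h: "h \<in> Hom F T" and h': "h' \<in> Hom F T" and eq: "chi h = chi h'"
    have fix_: "chi g a = g a" if g: "g \<in> Hom F T" and a: "a \<in> verts F" for g a
    proof -
      have "chi g a \<noteq> v" using unc chiH[OF g] a by blast
      then have "g a \<in> verts G" using a unfolding chi_def p_def by (auto split: if_splits)
      then show ?thesis using a unfolding chi_def p_def by simp
    qed
    show "h = h'"
    proof
      fix a show "h a = h' a"
      proof (cases "a \<in> verts F")
        case True then show ?thesis using fix_[OF h True] fix_[OF h' True] eq by simp
      next
        case False then show ?thesis using h h' unfolding Hom_def by (auto simp: PiE_def extensional_def)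
      qed
    qed
  qed
  then have "hom F T \<le> hom F G" unfolding hom_def
    using chiH finite_Hom[OF fF fG] by (intro card_inj_on_le) auto
  then show ?thesis using N wfT by blast
qed

lemma partF1: assumes "wf_graph F" "wf_graph G" "homto F G" "HDE F G > 0"
  shows "(\<Union>\<phi>\<in>Hom F G. \<phi> ` verts F) = verts G"
proof (rule ccontr)
  assume ne: "\<not> ?thesis"
  have "(\<Union>\<phi>\<in>Hom F G. \<phi> ` verts F) \<subseteq> verts G" unfolding Hom_def by auto
  then obtain v where v: "v \<in> verts G" and unc: "\<forall>\<phi>\<in>Hom F G. v \<notin> \<phi> ` verts F" using ne by blast
  define c where "c = HDE F G"
  have c: "c > 0" using assms c_def by simp
  have cin: "c \<in> HS F G" using HDE_in assms c_def by blast
  define K where "K = real (hom F G)"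
  define N where "N = nat \<lceil>(K + 1) powr (1 / c)\<rceil>"
  have K0: "K \<ge> 0" unfolding K_def by simp
  obtain T where T: "wf_graph T" "N \<le> hom G T" "hom F T \<le> hom F G" using blowup[OF assms(1,2) v unc] by blast
  have "(K + 1) powr (1 / c) \<le> real N" unfolding N_def by linarith
  then have "((K + 1) powr (1 / c)) powr c \<le> real N powr c" using c by (intro powr_mono2) auto
  also have "\<dots> \<le> real (hom G T) powr c" using c T(2) by (intro powr_mono2) auto
  also have "\<dots> \<le> real (hom F T)" using cin T(1) unfolding HS_def by blast
  also have "\<dots> \<le> K" using T(3) unfolding K_def by simp
  finally have "((K + 1) powr (1 / c)) powr c \<le> K" .
  moreover have "((K + 1) powr (1 / c)) powr c = K + 1" using c K0 by (simp add: powr_powr)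
  ultimately show False by simp
qed

lemma partF2: assumes F: "wf_graph F" and G: "wf_graph G" and cov: "(\<Union>\<phi>\<in>Hom F G. \<phi> ` verts F) = verts G"
  and FG: "homto F G"
  shows "HDE F G > 0"
proof -
  define k where "k = card (verts G)"
  have fG: "finite (verts G)" and fF: "finite (verts F)" and AF: "arcs F \<subseteq> verts F \<times> verts F"
    using F G unfolding wf_graph_def by auto
  have k: "k > 0" using G unfolding k_def wf_graph_def by (simp add: card_gt_0_iff)
  define ph where "ph v = (SOME \<phi>. \<phi> \<in> Hom F G \<and> v \<in> \<phi> ` verts F)" for v
  have ph: "ph v \<in> Hom F G \<and> v \<in> ph v ` verts F" if "v \<in> verts G" for v
  proof -
    have "v \<in> (\<Union>\<phi>\<in>Hom F G. \<phi> ` verts F)" using cov that by simp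
    then obtain \<phi> where "\<phi> \<in> Hom F G" "v \<in> \<phi> ` verts F" by (rule UN_E)
    then have "\<exists>\<phi>. \<phi> \<in> Hom F G \<and> v \<in> \<phi> ` verts F" by blast
    from someI_ex[OF this] show ?thesis unfolding ph_def .
  qed
  have "1 / real k \<in> HS F G" unfolding HS_def mem_Collect_eq
  proof (intro allI impI)
    fix T assume T: "wf_graph T"
    have fT: "finite (verts T)" using T unfolding wf_graph_def by simp
    define Th where "Th psi = (\<lambda>v\<in>verts G. restrict (psi \<circ> ph v) (verts F))" for psi :: "nat \<Rightarrow> nat"
    have "inj_on Th (Hom G T)"
    proof (rule inj_onI)
      fix g g' assume g: "g \<in> Hom G T" "g' \<in> Hom G T" and eq: "Th g = Th g'"
      show "g = g'"
      proof
        fix v show "g v = g' v"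
        proof (cases "v \<in> verts G")
          case True
          then obtain u where u: "u \<in> verts F" "v = ph v u" using ph by blast
          have "Th g v u = Th g' v u" using eq by simp
          then show ?thesis using True u unfolding Th_def by simp
        next
          case False then show ?thesis using g unfolding Hom_def by (auto simp: PiE_def extensional_def)
        qed
      qed
    qed
    moreover have "Th ` Hom G T \<subseteq> (verts G \<rightarrow>\<^sub>E Hom F T)"
    proof (rule image_subsetI)
      fix psi assume psi: "psi \<in> Hom G T"
      have "restrict (psi \<circ> ph v) (verts F) \<in> Hom F T" if "v \<in> verts G" for v
        using Hom_comp[OF AF _ psi] ph[OF that] by blast
      then show "Th psi \<in> verts G \<rightarrow>\<^sub>E Hom F T" unfolding Th_def by auto
    qed
    moreover have "finite (verts G \<rightarrow>\<^sub>E Hom F T)" using finite_Hom[OF fF fT] fG by (simp add: finite_PiE)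
    ultimately have "hom G T \<le> card (verts G \<rightarrow>\<^sub>E Hom F T)" unfolding hom_def by (rule card_inj_on_le)
    then have le: "hom G T \<le> hom F T ^ k" by (simp add: card_PiE fG hom_def k_def)
    show "real (hom G T) powr (1 / real k) \<le> real (hom F T)"
    proof (cases "hom G T = 0")
      case True then show ?thesis by simp
    next
      case False
      then have y: "real (hom F T) > 0" using le by (metis gr0I le_zero_eq of_nat_0_less_iff power_0_left k neq0_conv)
      have "real (hom G T) powr (1 / real k) \<le> real (hom F T ^ k) powr (1 / real k)"
        using le by (intro powr_mono2) auto
      also have "\<dots> = (real (hom F T) powr real k) powr (1 / real k)" using y by (simp add: powr_realpow)
      also have "\<dots> = real (hom F T)" using k y by (simp add: powr_powr)
      finally show ?thesis .
    qed
  qed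
  then have "1 / real k \<le> HDE F G" using HDE_ge F G FG by blast
  then show ?thesis using k by (meson less_le_trans of_nat_0_less_iff zero_less_divide_1_iff)
qed

definition sub :: "graph \<Rightarrow> nat set \<Rightarrow> graph" where "sub X Y = (Y, arcs X \<inter> Y \<times> Y)"
definition sur :: "graph \<Rightarrow> graph \<Rightarrow> nat set \<Rightarrow> nat" where
  "sur A X Y = card {f\<in>Hom A X. f ` verts A = Y}"

lemma Hom_sub_eq: "wf_graph A \<Longrightarrow> Y \<subseteq> verts X \<Longrightarrow> Hom A (sub X Y) = {f\<in>Hom A X. f ` verts A \<subseteq> Y}"
  unfolding Hom_def sub_def wf_graph_def verts_def arcs_def by (auto simp: PiE_def Pi_def; blast)

lemma hom_sub_sum: assumes A: "wf_graph A" and X: "finite (verts X)" and Y: "Y \<subseteq> verts X"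
  shows "hom A (sub X Y) = (\<Sum>Z\<in>Pow Y. sur A X Z)"
proof -
  have fA: "finite (verts A)" using A unfolding wf_graph_def by simp
  have fY: "finite Y" using Y X finite_subset by blast
  have "Hom A (sub X Y) = (\<Union>Z\<in>Pow Y. {f\<in>Hom A X. f ` verts A = Z})"
    unfolding Hom_sub_eq[OF A Y] by blast
  then have "hom A (sub X Y) = card (\<Union>Z\<in>Pow Y. {f\<in>Hom A X. f ` verts A = Z})" unfolding hom_def by simp
  also have "\<dots> = (\<Sum>Z\<in>Pow Y. card {f\<in>Hom A X. f ` verts A = Z})"
    using finite_Hom[OF fA X] fY by (intro card_UN_disjoint) auto
  finally show ?thesis unfolding sur_def .
qed

lemma hom_sub_eq: assumes F: "wf_graph F" and G: "wf_graph G" and eq: "\<forall>T. wf_graph T \<longrightarrow> hom F T = hom G T"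
  and X: "finite (verts X)" and Y: "Y \<subseteq> verts X"
  shows "hom F (sub X Y) = hom G (sub X Y)"
proof (cases "Y = {}")
  case True
  have "Hom A (sub X Y) = {}" if "wf_graph A" for A
    using that True unfolding Hom_def sub_def verts_def wf_graph_def by (auto simp: PiE_eq_empty_iff)
  then show ?thesis using F G unfolding hom_def by simp
next
  case False
  have "wf_graph (sub X Y)" unfolding wf_graph_def sub_def verts_def arcs_def
    using False Y X finite_subset by auto
  then show ?thesis using eq by blast
qed

lemma sur_eq: assumes F: "wf_graph F" and G: "wf_graph G" and eq: "\<forall>T. wf_graph T \<longrightarrow> hom F T = hom G T"
  and X: "finite (verts X)"
  shows "Y \<subseteq> verts X \<Longrightarrow> sur F X Y = sur G X Y"
proof -
  assume Y: "Y \<subseteq> verts X"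
  then have "finite Y" using X finite_subset by blast
  then show ?thesis using Y
  proof (induction Y rule: finite_psubset_induct)
    case (psubset Y)
    have IH: "\<And>Z. Z \<in> Pow Y - {Y} \<Longrightarrow> sur F X Z = sur G X Z"
      using psubset.IH psubset.prems by blast
    have s: "(\<Sum>Z\<in>Pow Y. sur A X Z) = sur A X Y + (\<Sum>Z\<in>Pow Y - {Y}. sur A X Z)" for A
      using psubset.hyps by (subst sum.remove[of _ Y]) auto
    have "(\<Sum>Z\<in>Pow Y. sur F X Z) = (\<Sum>Z\<in>Pow Y. sur G X Z)"
      using hom_sub_sum[OF F X psubset.prems] hom_sub_sum[OF G X psubset.prems]
        hom_sub_eq[OF F G eq X psubset.prems] by simp
    moreover have "(\<Sum>Z\<in>Pow Y - {Y}. sur F X Z) = (\<Sum>Z\<in>Pow Y - {Y}. sur G X Z)"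
      using IH by (rule sum.cong[OF refl])
    ultimately show ?case using s[of F] s[of G] by simp
  qed
qed

lemma surj_exists: assumes F: "wf_graph F" and G: "wf_graph G" and eq: "\<forall>T. wf_graph T \<longrightarrow> hom F T = hom G T"
  shows "\<exists>g\<in>Hom G F. g ` verts G = verts F"
proof -
  have fF: "finite (verts F)" and AF: "arcs F \<subseteq> verts F \<times> verts F" using F unfolding wf_graph_def by auto
  have idH: "restrict id (verts F) \<in> {f\<in>Hom F F. f ` verts F = verts F}"
    unfolding Hom_def using AF by auto
  have "sur F F (verts F) \<noteq> 0" unfolding sur_def using idH finite_Hom[OF fF fF]
    by (metis (no_types, lifting) card_0_eq empty_iff finite_subset mem_Collect_eq subsetI)
  then have "sur G F (verts F) \<noteq> 0" using sur_eq[OF F G eq fF, of "verts F"] by simp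
  then have "{f\<in>Hom G F. f ` verts G = verts F} \<noteq> {}" unfolding sur_def by (metis card.empty)
  then show ?thesis by blast
qed

lemma map_arcs: assumes A: "wf_graph A" and B: "wf_graph B" and f: "f \<in> Hom A B" and inj: "inj_on f (verts A)"
  shows "card (arcs A) \<le> card (arcs B)" and "map_prod f f ` arcs A \<subseteq> arcs B"
    and "inj_on (map_prod f f) (arcs A)"
proof -
  have AA: "arcs A \<subseteq> verts A \<times> verts A" using A unfolding wf_graph_def by auto
  have fB: "finite (arcs B)" using B unfolding wf_graph_def by (meson finite_SigmaI finite_subset)
  show sub: "map_prod f f ` arcs A \<subseteq> arcs B" using f unfolding Hom_def by auto
  show ij: "inj_on (map_prod f f) (arcs A)"
  proof (rule inj_onI)
    fix x y assume x: "x \<in> arcs A" and y: "y \<in> arcs A" and e: "map_prod f f x = map_prod f f y"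
    obtain a b where ab: "x = (a, b)" by (cases x)
    obtain a' b' where ab': "y = (a', b')" by (cases y)
    have "a \<in> verts A" "b \<in> verts A" "a' \<in> verts A" "b' \<in> verts A" using x y ab ab' AA by auto
    moreover have "f a = f a'" "f b = f b'" using e ab ab' by auto
    ultimately show "x = y" using inj ab ab' unfolding inj_on_def by auto
  qed
  show "card (arcs A) \<le> card (arcs B)" using card_inj_on_le[OF ij sub fB] .
qed

lemma hom_eq_iso: assumes F: "wf_graph F" and G: "wf_graph G" and eq: "\<forall>T. wf_graph T \<longrightarrow> hom F T = hom G T"
  shows "graph_iso F G"
proof -
  have eq': "\<forall>T. wf_graph T \<longrightarrow> hom G T = hom F T" using eq by simp
  obtain g where g: "g \<in> Hom G F" "g ` verts G = verts F" using surj_exists[OF F G eq] by blast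
  obtain f where f: "f \<in> Hom F G" "f ` verts F = verts G" using surj_exists[OF G F eq'] by blast
  have fF: "finite (verts F)" and fG: "finite (verts G)" using F G unfolding wf_graph_def by auto
  have c1: "card (verts F) \<le> card (verts G)" using g card_image_le[OF fG, of g] by simp
  have c2: "card (verts G) \<le> card (verts F)" using f card_image_le[OF fF, of f] by simp
  have injf: "inj_on f (verts F)" using f c1 c2 fF by (intro eq_card_imp_inj_on) auto
  have injg: "inj_on g (verts G)" using g c1 c2 fG by (intro eq_card_imp_inj_on) auto
  have a1: "card (arcs F) \<le> card (arcs G)" using map_arcs(1)[OF F G f(1) injf] .
  have a2: "card (arcs G) \<le> card (arcs F)" using map_arcs(1)[OF G F g(1) injg] .
  have fAG: "finite (arcs G)" using G unfolding wf_graph_def by (meson finite_SigmaI finite_subset)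
  have "card (map_prod f f ` arcs F) = card (arcs F)"
    using map_arcs(3)[OF F G f(1) injf] by (rule card_image)
  then have im: "map_prod f f ` arcs F = arcs G"
    using card_subset_eq[OF fAG map_arcs(2)[OF F G f(1) injf]] a1 a2 by simp
  have AF: "arcs F \<subseteq> verts F \<times> verts F" using F unfolding wf_graph_def by auto
  have "bij_betw f (verts F) (verts G)" using injf f(2) by (simp add: bij_betw_def)
  moreover have "(a,b) \<in> arcs F \<longleftrightarrow> (f a, f b) \<in> arcs G" if "a \<in> verts F" "b \<in> verts F" for a b
  proof
    assume "(a,b) \<in> arcs F" then show "(f a, f b) \<in> arcs G" using im by force
  next
    assume "(f a, f b) \<in> arcs G"
    then obtain a' b' where ab: "(a',b') \<in> arcs F" "f a' = f a" "f b' = f b" using im by force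
    then have "a' \<in> verts F" "b' \<in> verts F" using AF by auto
    then have "a' = a" "b' = b" using ab injf that unfolding inj_on_def by auto
    then show "(a,b) \<in> arcs F" using ab by simp
  qed
  ultimately show ?thesis unfolding graph_iso_def by blast
qed

lemma succ_le: assumes "wf_graph F" "wf_graph G" "succeq F G" "wf_graph T" shows "hom G T \<le> hom F T"
proof (cases "hom G T = 0")
  case True then show ?thesis by simp
next
  case False
  have h: "homto F G" "HDE F G \<ge> 1" using assms(3) unfolding succeq_def by auto
  have "real (hom G T) = real (hom G T) powr 1" by simp
  also have "\<dots> \<le> real (hom G T) powr HDE F G" using False h by (intro powr_mono) auto
  also have "\<dots> \<le> real (hom F T)" using partA assms h by blast
  finally show ?thesis by simp
qed

lemma succ_refl: assumes "wf_graph F" shows "succeq F F"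
proof -
  have "restrict id (verts F) \<in> Hom F F" using assms unfolding Hom_def wf_graph_def by auto
  moreover have "restrict id (verts F) ` verts F = verts F" by auto
  ultimately show ?thesis using partE assms by blast
qed

theorem lemma2p2:
  fixes F G H :: graph
  assumes "wf_graph F" and "wf_graph G" and "wf_graph H"
  shows
   "(homto F G \<longrightarrow> (\<forall>T. wf_graph T \<longrightarrow> real (hom G T) powr HDE F G \<le> real (hom F T)))
    \<and> (succeq F F
       \<and> (succeq F G \<and> succeq G H \<longrightarrow> succeq F H)
       \<and> (succeq F G \<and> succeq G F \<longrightarrow> graph_iso F G))
    \<and> (homto F G \<and> homto G H \<longrightarrow> HDE F H \<ge> HDE F G * HDE G H)
    \<and> (homto F G \<longrightarrow> (\<forall>m n :: nat. m > 0 \<and> n > 0 \<longrightarrow>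
          HDE (copies m F) (copies n G) = real m / real n * HDE F G))
    \<and> ((\<exists>f\<in>Hom F G. f ` verts F = verts G) \<longrightarrow> succeq F G)
    \<and> (homto F G \<longrightarrow> (HDE F G > 0 \<longleftrightarrow> (\<Union>\<phi>\<in>Hom F G. \<phi> ` verts F) = verts G))"
proof (intro conjI impI allI)
  show "homto F G \<Longrightarrow> wf_graph T \<Longrightarrow> real (hom G T) powr HDE F G \<le> real (hom F T)" for T
    using partA assms by blast
  show "succeq F F" using succ_refl assms by blast
  show "succeq F H" if "succeq F G \<and> succeq G H"
  proof -
    have h: "homto F G" "homto G H" "HDE F G \<ge> 1" "HDE G H \<ge> 1" using that unfolding succeq_def by auto
    have "homto F H" using homto_trans assms h unfolding wf_graph_def by blast
    moreover have "HDE F G * HDE G H \<ge> 1" using h by (metis mult_mono one_le_mult_iff zero_le_one order_trans mult_1_right)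
    ultimately show ?thesis using partC[OF assms h(1,2)] unfolding succeq_def by simp
  qed
  show "graph_iso F G" if "succeq F G \<and> succeq G F"
  proof (rule hom_eq_iso[OF assms(1,2)], intro allI impI)
    fix T assume "wf_graph T"
    then show "hom F T = hom G T" using succ_le[OF assms(1,2)] succ_le[OF assms(2,1)] that
      by (meson le_antisym)
  qed
  show "homto F G \<and> homto G H \<Longrightarrow> HDE F H \<ge> HDE F G * HDE G H" using partC assms by blast
  show "homto F G \<Longrightarrow> 0 < m \<and> 0 < n \<Longrightarrow> HDE (copies m F) (copies n G) = real m / real n * HDE F G" for m n
    using partD assms by blast
  show "succeq F G" if ex: "\<exists>f\<in>Hom F G. f ` verts F = verts G"
  proof -
    obtain f where "f \<in> Hom F G" "f ` verts F = verts G" using ex by blast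
    then show ?thesis by (rule partE[OF assms(1,2)])
  qed
  show "HDE F G > 0 \<longleftrightarrow> (\<Union>\<phi>\<in>Hom F G. \<phi> ` verts F) = verts G" if FG: "homto F G"
  proof
    assume "HDE F G > 0" then show "(\<Union>\<phi>\<in>Hom F G. \<phi> ` verts F) = verts G"
      by (rule partF1[OF assms(1,2) FG])
  next
    assume "(\<Union>\<phi>\<in>Hom F G. \<phi> ` verts F) = verts G" then show "HDE F G > 0"
      by (rule partF2[OF assms(1,2) _ FG])
  qed
qed
end
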